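(* Let $n$ be a positive integer and let $s,t$ be real numbers with $t>0$ and $\dfrac{s}{t} > \dfrac{4}{5} n^2$. Then the maximum of $|\det A|$ over all $A \in \mathcal{G}_s^{n\times n}([0,t])$ equals $$s^{n-1}t + \Big\lfloor \frac{n}{2}\Big\rfloor \Big\lfloor \frac{n-1}{2}\Big\rfloor s^{n-3}t^3.$$
   Context: For a real number $s$, a positive integer $n$ and a set $P \subseteq \mathbb{R}$, $\mathcal{G}_s^{n\times n}(P)$ denotes the set of all $n\times n$ real upper Hessenberg matrices $A=(a_{ij})$ with $a_{i+1,i} = s$ for $1\le i\le n-1$, $a_{ij}=0$ for $i > j+1$, and $a_{ij}\in P$ for all $i \le j$. *)

theory Defs
  imports "Jordan_Normal_Form.Determinant"
begin

text \<open>The set G_s^{n x n}(P) of n x n real upper Hessenberg matrices with constant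
  subdiagonal s and entries on/above the diagonal from P.  Indices are 0-based
  (row i, column j with i,j < n), which is the same as the paper's 1-based indexing
  shifted by one.\<close>
definition hess_set :: "real \<Rightarrow> nat \<Rightarrow> real set \<Rightarrow> real mat set" where
  "hess_set s n P = {A \<in> carrier_mat n n.
     \<forall>i<n. \<forall>j<n. (i = Suc j \<longrightarrow> A $$ (i, j) = s)
                \<and> (i > Suc j \<longrightarrow> A $$ (i, j) = 0)
                \<and> (i \<le> j \<longrightarrow> A $$ (i, j) \<in> P)}"

end

theory Submission
  imports Defs
begin


function hD :: "(nat \<Rightarrow> nat \<Rightarrow> real) \<Rightarrow> real \<Rightarrow> nat \<Rightarrow> nat \<Rightarrow> real" where
  "hD a s n p = (if n \<le> p then 1 else (\<Sum>j\<in>{p..<n}. (-s)^(j-p) * a p j * hD a s n (Suc j)))"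
  by pat_completeness auto
termination by (relation "measure (\<lambda>(a,s,n,p). n - p)") auto

declare hD.simps[simp del]

lemma hD_end: "n \<le> p \<Longrightarrow> hD a s n p = 1"
  by (simp add: hD.simps)

lemma hD_step: "p < n \<Longrightarrow> hD a s n p = (\<Sum>j\<in>{p..<n}. (-s)^(j-p) * a p j * hD a s n (Suc j))"
  by (simp add: hD.simps)

lemma hD_cong:
  assumes "\<And>i j. p \<le> i \<Longrightarrow> i < n \<Longrightarrow> j < n \<Longrightarrow> a i j = a' i j"
  shows "hD a s n p = hD a' s n p"
  using assms
proof (induction a s n p rule: hD.induct)
  case (1 a s n p)
  show ?case
  proof (cases "n \<le> p")
    case True then show ?thesis by (simp add: hD_end)
  next
    case False
    have "hD a s n p = (\<Sum>j\<in>{p..<n}. (-s)^(j-p) * a p j * hD a s n (Suc j))"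
      using False by (simp add: hD_step)
    also have "\<dots> = (\<Sum>j\<in>{p..<n}. (-s)^(j-p) * a' p j * hD a' s n (Suc j))"
    proof (rule sum.cong[OF refl])
      fix j assume j: "j \<in> {p..<n}"
      have "hD a s n (Suc j) = hD a' s n (Suc j)"
        using 1 False j by auto
      moreover have "a p j = a' p j" using 1(2) False j by auto
      ultimately show "(-s)^(j-p) * a p j * hD a s n (Suc j) = (-s)^(j-p) * a' p j * hD a' s n (Suc j)"
        by simp
    qed
    also have "\<dots> = hD a' s n p" using False by (simp add: hD_step)
    finally show ?thesis .
  qed
qed

lemma hD_shift: "hD (\<lambda>i j. a (Suc i) (Suc j)) s n p = hD a s (Suc n) (Suc p)"
proof (induction "(\<lambda>i j. a (Suc i) (Suc j))" s n p rule: hD.induct)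
  case (1 s n p)
  show ?case
  proof (cases "n \<le> p")
    case True then show ?thesis by (simp add: hD_end)
  next
    case False
    have "hD (\<lambda>i j. a (Suc i) (Suc j)) s n p
        = (\<Sum>j\<in>{p..<n}. (-s)^(j-p) * a (Suc p) (Suc j) * hD a s (Suc n) (Suc (Suc j)))"
      using False 1 by (simp add: hD_step)
    also have "\<dots> = (\<Sum>j\<in>{Suc p..<Suc n}. (-s)^(j-Suc p) * a (Suc p) j * hD a s (Suc n) (Suc j))"
      by (simp only: sum.shift_bounds_Suc_ivl) simp
    also have "\<dots> = hD a s (Suc n) (Suc p)" using False by (simp add: hD_step)
    finally show ?thesis .
  qed
qed


lemma hD_merge0:
  assumes "0 < n"
  shows "hD (\<lambda>i j. if i = 0 then a 0 (Suc j) else a (Suc i) (Suc j)) s n 0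
     = (\<Sum>j\<in>{0..<n}. (-s)^j * a 0 (Suc j) * hD a s (Suc n) (Suc (Suc j)))"
proof -
  let ?a' = "\<lambda>i j. if i = 0 then a 0 (Suc j) else a (Suc i) (Suc j)"
  have "hD ?a' s n 0 = (\<Sum>j\<in>{0..<n}. (-s)^j * ?a' 0 j * hD ?a' s n (Suc j))"
    using assms by (simp add: hD_step)
  also have "\<dots> = (\<Sum>j\<in>{0..<n}. (-s)^j * a 0 (Suc j) * hD a s (Suc n) (Suc (Suc j)))"
  proof (rule sum.cong[OF refl])
    fix j assume j: "j \<in> {0..<n}"
    have "hD ?a' s n (Suc j) = hD (\<lambda>i j. a (Suc i) (Suc j)) s n (Suc j)"
      by (rule hD_cong) auto
    also have "\<dots> = hD a s (Suc n) (Suc (Suc j))" by (rule hD_shift)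
    finally show "(-s)^j * ?a' 0 j * hD ?a' s n (Suc j) = (-s)^j * a 0 (Suc j) * hD a s (Suc n) (Suc (Suc j))"
      by simp
  qed
  finally show ?thesis .
qed

lemma hD_expand0:
  assumes "0 < n"
  shows "hD a s (Suc n) 0 = a 0 0 * hD (\<lambda>i j. a (Suc i) (Suc j)) s n 0
      - s * hD (\<lambda>i j. if i = 0 then a 0 (Suc j) else a (Suc i) (Suc j)) s n 0"
proof -
  have "hD a s (Suc n) 0 = (\<Sum>j\<in>{0..<Suc n}. (-s)^j * a 0 j * hD a s (Suc n) (Suc j))"
    by (simp add: hD_step)
  also have "\<dots> = a 0 0 * hD a s (Suc n) 1 + (\<Sum>j\<in>{0..<n}. (-s)^(Suc j) * a 0 (Suc j) * hD a s (Suc n) (Suc (Suc j)))"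
    by (subst sum.atLeast0_lessThan_Suc_shift) simp
  also have "(\<Sum>j\<in>{0..<n}. (-s)^(Suc j) * a 0 (Suc j) * hD a s (Suc n) (Suc (Suc j)))
      = - s * (\<Sum>j\<in>{0..<n}. (-s)^j * a 0 (Suc j) * hD a s (Suc n) (Suc (Suc j)))"
    by (simp add: sum_distrib_left mult.assoc)
  also have "hD a s (Suc n) 1 = hD (\<lambda>i j. a (Suc i) (Suc j)) s n 0"
    using hD_shift[of a s n 0] by simp
  finally show ?thesis using hD_merge0[OF assms, of a s] by simp
qed

lemma det_hess:
  assumes "A \<in> carrier_mat n n"
    and "\<forall>i<n. \<forall>j<n. (i = Suc j \<longrightarrow> A $$ (i,j) = s) \<and> (Suc j < i \<longrightarrow> A $$ (i,j) = 0)"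
  shows "det A = hD (\<lambda>i j. A $$ (i,j)) s n 0"
  using assms
proof (induction n arbitrary: A)
  case 0
  then show ?case by (simp add: hD_end det_def)
next
  case (Suc n)
  note A = Suc.prems(1)
  have lap: "det A = (\<Sum>i<Suc n. A $$ (i,0) * cofactor A i 0)"
    by (rule laplace_expansion_column[OF A]) simp
  define B0 where "B0 = mat_delete A 0 0"
  define B1 where "B1 = mat_delete A 1 0"
  have B0c: "B0 \<in> carrier_mat n n" and B1c: "B1 \<in> carrier_mat n n"
    using A by (auto simp: B0_def B1_def mat_delete_def)
  have B0e: "\<And>i j. i < n \<Longrightarrow> j < n \<Longrightarrow> B0 $$ (i,j) = A $$ (Suc i, Suc j)"
    using A by (auto simp: B0_def mat_delete_def)
  have B1e: "\<And>i j. i < n \<Longrightarrow> j < n \<Longrightarrow> B1 $$ (i,j) = (if i = 0 then A $$ (0, Suc j) else A $$ (Suc i, Suc j))"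
    using A by (auto simp: B1_def mat_delete_def)
  have B0h: "\<forall>i<n. \<forall>j<n. (i = Suc j \<longrightarrow> B0 $$ (i,j) = s) \<and> (Suc j < i \<longrightarrow> B0 $$ (i,j) = 0)"
    using Suc.prems(2) by (auto simp: B0e)
  have B1h: "\<forall>i<n. \<forall>j<n. (i = Suc j \<longrightarrow> B1 $$ (i,j) = s) \<and> (Suc j < i \<longrightarrow> B1 $$ (i,j) = 0)"
    using Suc.prems(2) by (auto simp: B1e)
  have d0: "det B0 = hD (\<lambda>i j. A $$ (Suc i, Suc j)) s n 0"
    using Suc.IH[OF B0c B0h] by (auto intro!: hD_cong simp: B0e)
  have d1: "det B1 = hD (\<lambda>i j. if i = 0 then A $$ (0, Suc j) else A $$ (Suc i, Suc j)) s n 0"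
    using Suc.IH[OF B1c B1h] by (auto intro!: hD_cong simp: B1e)
  show ?case
  proof (cases "n = 0")
    case True
    have "det A = A $$ (0,0) * cofactor A 0 0" using lap True by simp
    also have "cofactor A 0 0 = 1" using B0c True by (simp add: cofactor_def B0_def[symmetric] det_def)
    finally show ?thesis using True by (simp add: hD_step hD_end)
  next
    case False
    have "(\<Sum>i<Suc n. A $$ (i,0) * cofactor A i 0) = (\<Sum>i\<in>{0,1}. A $$ (i,0) * cofactor A i 0)"
    proof (rule sum.mono_neutral_right)
      show "{0, 1} \<subseteq> {..<Suc n}" using False by auto
      show "\<forall>i\<in>{..<Suc n} - {0, 1}. A $$ (i, 0) * cofactor A i 0 = 0"
        using Suc.prems(2) by auto
    qed simp
    also have "\<dots> = A $$ (0,0) * det B0 - s * det B1"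
      using Suc.prems(2)[rule_format, of 1 0] False by (simp add: cofactor_def B0_def B1_def)
    finally have "det A = A $$ (0,0) * det B0 - s * det B1" using lap by simp
    then show ?thesis using hD_expand0[of n "\<lambda>i j. A $$ (i,j)" s] False d0 d1 by simp
  qed
qed



lemma swap_tri:
  fixes f :: "nat \<Rightarrow> nat \<Rightarrow> real"
  shows "(\<Sum>k\<in>{0..<d}. \<Sum>l\<in>{Suc k..<d}. f k l) = (\<Sum>l\<in>{0..<d}. \<Sum>k\<in>{0..<l}. f k l)"
proof -
  have "(\<Sum>k\<in>{0..<d}. \<Sum>l\<in>{Suc k..<d}. f k l) = (\<Sum>k\<in>{0..<d}. \<Sum>l\<in>{l\<in>{0..<d}. k < l}. f k l)"
    by (rule sum.cong[OF refl], rule sum.cong) auto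
  also have "\<dots> = (\<Sum>l\<in>{0..<d}. \<Sum>k\<in>{k\<in>{0..<d}. k < l}. f k l)"
    by (rule sum.swap_restrict) auto
  also have "\<dots> = (\<Sum>l\<in>{0..<d}. \<Sum>k\<in>{0..<l}. f k l)"
    by (rule sum.cong[OF refl], rule sum.cong) auto
  finally show ?thesis .
qed

lemma nat_quad: "(k::nat) \<le> d \<Longrightarrow> k * (d - k) \<le> ((d + 1) div 2) * (d div 2)"
proof -
  assume kd: "k \<le> d"
  have ev: "\<exists>e::nat. d = 2*e \<or> d = 2*e+1" by presburger
  then obtain e where "d = 2*e \<or> d = 2*e+1" by blast
  then show ?thesis
  proof
    assume d: "d = 2*e"
    have "(int k - int e) * (int k - int e) \<ge> 0" by simp
    then have "int k * (int d - int k) \<le> int e * int e"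
      using d by (simp add: algebra_simps)
    moreover have "int (k * (d - k)) = int k * (int d - int k)" using kd by simp
    moreover have "(d + 1) div 2 = e" "d div 2 = e" using d by auto
    ultimately show ?thesis by (metis of_nat_le_iff of_nat_mult)
  next
    assume d: "d = 2*e+1"
    have "int k * (int d - int k) \<le> int (e+1) * int e"
    proof (cases "k \<le> e")
      case True
      have "(int e - int k) * (int e + 1 - int k) \<ge> 0" using True by simp
      then show ?thesis using d by (simp add: algebra_simps)
    next
      case False
      have "(int k - int e) * (int k - int e - 1) \<ge> 0" using False by simp
      then show ?thesis using d by (simp add: algebra_simps)
    qed
    moreover have "int (k * (d - k)) = int k * (int d - int k)" using kd by simp
    moreover have "(d + 1) div 2 = e + 1" "d div 2 = e" using d by auto
    ultimately show ?thesis by (metis of_nat_le_iff of_nat_mult)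
  qed
qed


lemma key:
  fixes e v :: "nat \<Rightarrow> real" and c :: "nat \<Rightarrow> nat \<Rightarrow> real" and y B :: real and d :: nat
  assumes y: "0 < y" and B0: "0 \<le> B"
    and rec: "\<forall>j<d. e j = v j - y * (\<Sum>k\<in>{Suc j..<d}. c j k * e k)"
    and vb: "\<forall>j<d. 0 \<le> v j \<and> v j \<le> 1"
    and cb: "\<forall>j<d. \<forall>k<d. Suc j \<le> k \<longrightarrow> 0 \<le> c j k \<and> c j k \<le> 1"
    and eB: "\<forall>j<d. \<bar>e j\<bar> \<le> B"
    and small: "y^2 * (real d)^2 * B \<le> 1"
  shows "(\<Sum>j\<in>{0..<d}. max 0 (- e j)) \<le> y * real (((d+1) div 2) * (d div 2))"
proof -
  define Nn where "Nn j = max 0 (- e j)" for j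
  define P where "P j = max 0 (e j)" for j
  define mu where "mu j = (if e j < 0 then 1 else 0::real)" for j
  have Nn0: "\<And>j. 0 \<le> Nn j" and P0: "\<And>j. 0 \<le> P j" and mu0: "\<And>j. 0 \<le> mu j"
    and mu1: "\<And>j. mu j \<le> 1" and F4: "\<And>j. Nn j = mu j * Nn j"
    and muP: "\<And>j. (1 - mu j) * P j = P j" and mumu: "\<And>j. mu j * (1 - mu j) = 0"
    by (auto simp: Nn_def P_def mu_def)
  have PB: "\<And>j. j < d \<Longrightarrow> P j \<le> B" using eB by (auto simp: P_def B0)
  have F1: "Nn j \<le> y * (\<Sum>k\<in>{Suc j..<d}. (1 - mu k) * P k)" if j: "j < d" for j
  proof -
    have t: "c j k * e k \<le> (1 - mu k) * P k" if k: "k \<in> {Suc j..<d}" for k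
    proof (cases "e k < 0")
      case True
      have "c j k * e k \<le> 0" using cb j k True by (auto intro: mult_nonneg_nonpos)
      then show ?thesis using True by (simp add: mu_def P_def)
    next
      case False
      have "c j k * e k \<le> 1 * e k" using cb j k False by (intro mult_right_mono) auto
      then show ?thesis using False by (simp add: mu_def P_def)
    qed
    have S: "(\<Sum>k\<in>{Suc j..<d}. c j k * e k) \<le> (\<Sum>k\<in>{Suc j..<d}. (1 - mu k) * P k)"
      by (rule sum_mono) (use t in auto)
    have S0: "0 \<le> (\<Sum>k\<in>{Suc j..<d}. (1 - mu k) * P k)"
      by (rule sum_nonneg) (use mu1 P0 in auto)
    show ?thesis
    proof (cases "e j < 0")
      case True
      have "Nn j = y * (\<Sum>k\<in>{Suc j..<d}. c j k * e k) - v j"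
        using True rec j by (simp add: Nn_def)
      also have "\<dots> \<le> y * (\<Sum>k\<in>{Suc j..<d}. c j k * e k)" using vb j by simp
      also have "\<dots> \<le> y * (\<Sum>k\<in>{Suc j..<d}. (1 - mu k) * P k)" using S y by simp
      finally show ?thesis .
    next
      case False
      then show ?thesis using S0 y by (simp add: Nn_def)
    qed
  qed
  have F2: "P k \<le> 1 + y * (\<Sum>l\<in>{Suc k..<d}. Nn l)" if k: "k < d" for k
  proof -
    have t: "- (c k l * e l) \<le> Nn l" if l: "l \<in> {Suc k..<d}" for l
    proof (cases "e l < 0")
      case True
      have "c k l * (- e l) \<le> 1 * (- e l)" using cb k l True by (intro mult_right_mono) auto
      then show ?thesis using True by (simp add: Nn_def)
    next
      case False
      have "0 \<le> c k l * e l" using cb k l False by auto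
      then show ?thesis by (simp add: Nn_def)
    qed
    have S: "- (\<Sum>l\<in>{Suc k..<d}. c k l * e l) \<le> (\<Sum>l\<in>{Suc k..<d}. Nn l)"
      using sum_mono[of "{Suc k..<d}" "\<lambda>l. - (c k l * e l)" Nn] t by (simp add: sum_negf)
    have S0: "0 \<le> (\<Sum>l\<in>{Suc k..<d}. Nn l)" by (rule sum_nonneg) (use Nn0 in auto)
    show ?thesis
    proof (cases "e k \<le> 0")
      case True
      then show ?thesis using S0 y by (simp add: P_def)
    next
      case False
      have "P k = v k + y * (- (\<Sum>l\<in>{Suc k..<d}. c k l * e l))"
        using False rec k by (simp add: P_def)
      also have "\<dots> \<le> 1 + y * (\<Sum>l\<in>{Suc k..<d}. Nn l)"
        using vb k S y by (intro add_mono mult_left_mono) auto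
      finally show ?thesis .
    qed
  qed
  have F3: "Nn l \<le> y * real d * B" if l: "l < d" for l
  proof -
    have "(\<Sum>k\<in>{Suc l..<d}. (1 - mu k) * P k) \<le> (\<Sum>k\<in>{Suc l..<d}. B)"
      by (rule sum_mono) (metis muP PB atLeastLessThan_iff)
    also have "\<dots> = real (d - Suc l) * B" by simp
    also have "\<dots> \<le> real d * B" using B0 by (intro mult_right_mono) auto
    finally show ?thesis using F1[OF l] y by (smt (verit) mult_left_mono mult.assoc)
  qed
  define C where "C = y^2 * real d * B"
  have C0: "0 \<le> C" using y B0 by (simp add: C_def)
  define S where "S k = (\<Sum>l\<in>{Suc k..<d}. mu l)" for k
  have S0: "\<And>k. 0 \<le> S k" unfolding S_def by (rule sum_nonneg) (use mu0 in auto)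
  have G1: "Nn j \<le> y * (\<Sum>k\<in>{Suc j..<d}. (1 - mu k) * (1 + C * S k))" if j: "j < d" for j
  proof -
    have "(1 - mu k) * P k \<le> (1 - mu k) * (1 + C * S k)" if k: "k \<in> {Suc j..<d}" for k
    proof -
      have "(\<Sum>l\<in>{Suc k..<d}. Nn l) \<le> (\<Sum>l\<in>{Suc k..<d}. mu l * (y * real d * B))"
        proof (rule sum_mono)
        fix l assume l: "l \<in> {Suc k..<d}"
        have "mu l * Nn l \<le> mu l * (y * real d * B)" using F3[of l] l mu0[of l] by (intro mult_left_mono) auto
        then show "Nn l \<le> mu l * (y * real d * B)" using F4[of l] by simp
      qed
      also have "\<dots> = y * real d * B * S k" by (simp add: S_def sum_distrib_left mult.commute)
      finally have "y * (\<Sum>l\<in>{Suc k..<d}. Nn l) \<le> y * (y * real d * B * S k)"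
        using y by simp
      also have "\<dots> = C * S k" by (simp add: C_def power2_eq_square)
      finally have "P k \<le> 1 + C * S k" using F2[of k] k by simp
      then show ?thesis using mu1[of k] by (intro mult_left_mono) auto
    qed
    then have "(\<Sum>k\<in>{Suc j..<d}. (1 - mu k) * P k) \<le> (\<Sum>k\<in>{Suc j..<d}. (1 - mu k) * (1 + C * S k))"
      by (rule sum_mono)
    then show ?thesis using F1[OF j] y by (smt (verit) mult_left_mono)
  qed
  define A where "A = (\<Sum>j\<in>{0..<d}. \<Sum>k\<in>{Suc j..<d}. mu j * (1 - mu k))"
  define I where "I = (\<Sum>k\<in>{0..<d}. \<Sum>l\<in>{Suc k..<d}. (1 - mu k) * mu l)"
  define T where "T = (\<Sum>j\<in>{0..<d}. \<Sum>k\<in>{Suc j..<d}. mu j * (1 - mu k) * S k)"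
  have I_alt: "I = (\<Sum>k\<in>{0..<d}. (1 - mu k) * S k)"
    unfolding I_def S_def by (simp add: sum_distrib_left)
  have I0: "0 \<le> I" unfolding I_alt by (rule sum_nonneg) (use mu1 S0 in auto)
  have N1: "(\<Sum>j\<in>{0..<d}. Nn j) \<le> y * (A + C * T)"
  proof -
    have "(\<Sum>j\<in>{0..<d}. Nn j) = (\<Sum>j\<in>{0..<d}. mu j * Nn j)" using F4 by (metis (no_types, lifting) sum.cong)
    also have "\<dots> \<le> (\<Sum>j\<in>{0..<d}. mu j * (y * (\<Sum>k\<in>{Suc j..<d}. (1 - mu k) * (1 + C * S k))))"
      by (rule sum_mono) (use G1 mu0 in \<open>auto intro: mult_left_mono\<close>)
    also have "\<dots> = (\<Sum>j\<in>{0..<d}. y * (\<Sum>k\<in>{Suc j..<d}. mu j * (1 - mu k)) + y * C * (\<Sum>k\<in>{Suc j..<d}. mu j * (1 - mu k) * S k))"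
    proof (rule sum.cong[OF refl])
      fix j
      have "mu j * (y * (\<Sum>k\<in>{Suc j..<d}. (1 - mu k) * (1 + C * S k)))
          = y * (\<Sum>k\<in>{Suc j..<d}. mu j * (1 - mu k) + C * (mu j * (1 - mu k) * S k))"
        by (simp add: sum_distrib_left algebra_simps)
      also have "\<dots> = y * (\<Sum>k\<in>{Suc j..<d}. mu j * (1 - mu k)) + y * C * (\<Sum>k\<in>{Suc j..<d}. mu j * (1 - mu k) * S k)"
        by (subst sum.distrib, subst sum_distrib_left[symmetric, of C]) (simp add: algebra_simps)
      finally show "mu j * (y * (\<Sum>k\<in>{Suc j..<d}. (1 - mu k) * (1 + C * S k))) = \<dots>" .
    qed
    also have "\<dots> = y * A + y * C * T"
      by (simp add: A_def T_def sum.distrib sum_distrib_left[symmetric])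
    also have "\<dots> = y * (A + C * T)" by (simp add: algebra_simps)
    finally show ?thesis .
  qed
  have T1: "T \<le> real d * I"
  proof -
    have "(\<Sum>k\<in>{Suc j..<d}. mu j * (1 - mu k) * S k) \<le> I" if j: "j \<in> {0..<d}" for j
    proof -
      have "(\<Sum>k\<in>{Suc j..<d}. mu j * (1 - mu k) * S k) \<le> (\<Sum>k\<in>{Suc j..<d}. (1 - mu k) * S k)"
        by (rule sum_mono) (use mu0 mu1 S0 in \<open>auto intro: mult_left_le_one_le mult_nonneg_nonneg simp: mult.assoc\<close>)
      also have "\<dots> \<le> (\<Sum>k\<in>{0..<d}. (1 - mu k) * S k)"
        by (rule sum_mono2) (use mu1 S0 in auto)
      finally show ?thesis by (simp add: I_alt)
    qed
    then have "T \<le> (\<Sum>j\<in>{0..<d}. I)" unfolding T_def by (rule sum_mono)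
    then show ?thesis by simp
  qed
  have CT: "C * T \<le> I"
  proof -
    have "C * T \<le> C * (real d * I)" using T1 C0 by (rule mult_left_mono)
    also have "C * real d = y^2 * (real d)^2 * B" by (simp add: C_def power2_eq_square)
    then have "C * (real d * I) \<le> 1 * I" using small I0
      by (metis mult.assoc mult_right_mono)
    finally show ?thesis by simp
  qed
  define K where "K = (\<Sum>j\<in>{0..<d}. mu j)"
  have AI: "A + I = K * (real d - K)"
  proof -
    have I2: "I = (\<Sum>l\<in>{0..<d}. \<Sum>k\<in>{0..<l}. (1 - mu k) * mu l)"
      unfolding I_def by (rule swap_tri)
    have row: "(\<Sum>k\<in>{Suc j..<d}. mu j * (1 - mu k)) + (\<Sum>k\<in>{0..<j}. (1 - mu k) * mu j)
        = mu j * (real d - K)" if j: "j \<in> {0..<d}" for j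
    proof -
      have spl: "(\<Sum>k\<in>{0..<d}. 1 - mu k) = (\<Sum>k\<in>{0..<j}. 1 - mu k) + (1 - mu j) + (\<Sum>k\<in>{Suc j..<d}. 1 - mu k)"
        using j sum.atLeastLessThan_concat[of 0 j d "\<lambda>k. 1 - mu k"] sum.atLeast_Suc_lessThan[of j d "\<lambda>k. 1 - mu k"]
        by simp
      have dK: "(\<Sum>k\<in>{0..<d}. 1 - mu k) = real d - K" by (simp add: K_def sum_subtractf)
      then have "mu j * (real d - K) = mu j * (\<Sum>k\<in>{0..<j}. 1 - mu k) + mu j * (1 - mu j) + mu j * (\<Sum>k\<in>{Suc j..<d}. 1 - mu k)"
      proof -
        have e1: "real d - K = (\<Sum>k\<in>{0..<j}. 1 - mu k) + (1 - mu j) + (\<Sum>k\<in>{Suc j..<d}. 1 - mu k)"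
          using spl \<open>(\<Sum>k\<in>{0..<d}. 1 - mu k) = real d - K\<close> by linarith
        show ?thesis by (subst e1) (simp add: distrib_left)
      qed
      then show ?thesis using mumu[of j] by (simp add: sum_distrib_left mult.commute)
    qed
    have "A + I = (\<Sum>j\<in>{0..<d}. (\<Sum>k\<in>{Suc j..<d}. mu j * (1 - mu k)) + (\<Sum>k\<in>{0..<j}. (1 - mu k) * mu j))"
      unfolding A_def I2 by (simp add: sum.distrib)
    also have "\<dots> = (\<Sum>j\<in>{0..<d}. mu j * (real d - K))" by (rule sum.cong[OF refl]) (rule row)
    also have "\<dots> = K * (real d - K)" by (simp add: K_def sum_distrib_right)
    finally show ?thesis .
  qed
  define Kn where "Kn = card {j\<in>{0..<d}. e j < 0}"
  have KKn: "K = real Kn"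
  proof -
    have "K = (\<Sum>j\<in>{0..<d}. if e j < 0 then 1 else 0)" by (simp add: K_def mu_def)
    also have "\<dots> = (\<Sum>j\<in>{j\<in>{0..<d}. e j < 0}. 1)" by (rule sum.inter_filter[symmetric]) simp
    also have "\<dots> = real Kn" by (simp add: Kn_def)
    finally show ?thesis .
  qed
  have Knd: "Kn \<le> d" unfolding Kn_def
  proof -
    have "card {j\<in>{0..<d}. e j < 0} \<le> card {0..<d}" by (rule card_mono) auto
    then show "card {j\<in>{0..<d}. e j < 0} \<le> d" by simp
  qed
  have "K * (real d - K) = real (Kn * (d - Kn))" using Knd by (simp add: KKn of_nat_diff)
  also have "\<dots> \<le> real (((d+1) div 2) * (d div 2))"
    by (subst of_nat_le_iff) (rule nat_quad[OF Knd])
  finally have KQ: "A + I \<le> real (((d+1) div 2) * (d div 2))" using AI by simp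
  have "(\<Sum>j\<in>{0..<d}. max 0 (- e j)) = (\<Sum>j\<in>{0..<d}. Nn j)" by (simp add: Nn_def)
  also have "\<dots> \<le> y * (A + C * T)" by (rule N1)
  also have "\<dots> \<le> y * (A + I)" using CT y by simp
  also have "\<dots> \<le> y * real (((d+1) div 2) * (d div 2))" using KQ y by simp
  finally show ?thesis .
qed


lemma Qle: "(m' div 2) * ((m' - 1) div 2) \<le> m * (m::nat)" if "m' \<le> m"
proof -
  have "(m' div 2) * ((m' - 1) div 2) \<le> m' * m'" by (intro mult_le_mono) auto
  also have "\<dots> \<le> m * m" using that by (intro mult_le_mono) auto
  finally show ?thesis .
qed

lemma small_bounds:
  fixes y :: real and m d :: nat
  assumes y: "0 < y" and ym: "y * (real m)^2 \<le> 5/4" and dm: "d < m"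
  shows "y^2 * (real d)^2 * (1 + (real m)^2 * y^2) \<le> 1"
    and "y * real d * (1 + (real m)^2 * y^2) \<le> 1"
proof -
  have "y^2 * (real d)^2 * (1 + (real m)^2 * y^2) \<le> 1 \<and> y * real d * (1 + (real m)^2 * y^2) \<le> 1"
  proof (cases "d = 0")
    case True then show ?thesis by simp
  next
    case False
    then have m2: "2 \<le> real m" using dm by linarith
    define z where "z = y * real m"
    have z0: "0 \<le> z" using y by (simp add: z_def)
    have "z * real m \<le> 5/4" using ym by (simp add: z_def power2_eq_square mult.assoc)
    moreover have "z * 2 \<le> z * real m" using m2 z0 by (intro mult_left_mono) auto
    ultimately have z58: "z \<le> 5/8" by linarith
    have yd: "y * real d \<le> z" unfolding z_def using y dm by (intro mult_left_mono) auto
    have yd0: "0 \<le> y * real d" using y by simp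
    have B: "1 + (real m)^2 * y^2 = 1 + z^2" by (simp add: z_def power_mult_distrib)
    have "z^2 \<le> (5/8)^2" using z58 z0 by (intro power_mono) auto
    then have z2: "z^2 \<le> 25/64" by (simp add: power2_eq_square)
    have yd2: "(y * real d)^2 \<le> z^2" using yd yd0 by (intro power_mono) auto
    have "y^2 * (real d)^2 * (1 + (real m)^2 * y^2) = (y * real d)^2 * (1 + z^2)" by (simp add: B power_mult_distrib)
    also have "\<dots> \<le> (25/64) * (1 + 25/64)" using yd2 z2 by (intro mult_mono) auto
    finally have 1: "y^2 * (real d)^2 * (1 + (real m)^2 * y^2) \<le> 1" by simp
    have "y * real d * (1 + (real m)^2 * y^2) = (y * real d) * (1 + z^2)" by (simp add: B)
    also have "\<dots> \<le> (5/8) * (1 + 25/64)" using yd z58 z2 yd0 by (intro mult_mono) auto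
    finally have 2: "y * real d * (1 + (real m)^2 * y^2) \<le> 1" by simp
    show ?thesis using 1 2 by simp
  qed
  then show "y^2 * (real d)^2 * (1 + (real m)^2 * y^2) \<le> 1" "y * real d * (1 + (real m)^2 * y^2) \<le> 1" by auto
qed

lemma core:
  fixes m :: nat and y :: real
  shows "\<And>E b. 0 < y \<Longrightarrow> y * (real m)^2 \<le> 5/4 \<Longrightarrow> 1 \<le> m \<Longrightarrow>
    \<forall>p<m. E p = b p (m-1) - y * (\<Sum>j\<in>{p..<m-1}. b p j * E (Suc j)) \<Longrightarrow>
    \<forall>i j. i \<le> j \<longrightarrow> j < m \<longrightarrow> 0 \<le> b i j \<and> b i j \<le> 1 \<Longrightarrow>
    \<bar>E 0\<bar> \<le> 1 + real ((m div 2) * ((m-1) div 2)) * y^2"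
proof (induction m rule: less_induct)
  case (less m E b)
  note y = less.prems(1) and ym = less.prems(2) and m1 = less.prems(3)
    and rec = less.prems(4) and bb = less.prems(5)
  define d where "d = m - 1"
  define B where "B = 1 + (real m)^2 * y^2"
  have B0: "0 \<le> B" by (simp add: B_def)
  have eB: "\<forall>j<d. \<bar>E (Suc j)\<bar> \<le> B"
  proof (intro allI impI)
    fix j assume j: "j < d"
    define l where "l = Suc j"
    define m' where "m' = m - l"
    have lm: "l < m" using j by (simp add: l_def d_def)
    have m'm: "m' < m" "1 \<le> m'" using lm by (auto simp: m'_def l_def)
    have ym': "y * (real m')^2 \<le> 5/4"
    proof -
      have "y * (real m')^2 \<le> y * (real m)^2" using y m'm by (intro mult_left_mono power_mono) auto
      then show ?thesis using ym by simp
    qed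
    have rec': "\<forall>p<m'. E (p + l) = b (p + l) (m'-1 + l) - y * (\<Sum>k\<in>{p..<m'-1}. b (p + l) (k + l) * E (Suc k + l))"
    proof (intro allI impI)
      fix p assume p: "p < m'"
      have "E (p + l) = b (p + l) (m-1) - y * (\<Sum>k\<in>{p + l..<m-1}. b (p + l) k * E (Suc k))"
        using rec p by (simp add: m'_def)
      also have "m - 1 = m' - 1 + l" using lm m'm by (simp add: m'_def)
      also have "(\<Sum>k\<in>{p + l..<m' - 1 + l}. b (p + l) k * E (Suc k)) = (\<Sum>k\<in>{p..<m'-1}. b (p + l) (k + l) * E (Suc k + l))"
        by (simp add: sum.shift_bounds_nat_ivl)
      finally show "E (p + l) = b (p + l) (m'-1 + l) - y * (\<Sum>k\<in>{p..<m'-1}. b (p + l) (k + l) * E (Suc k + l))" .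
    qed
    have bb': "\<forall>i k. i \<le> k \<longrightarrow> k < m' \<longrightarrow> 0 \<le> b (i + l) (k + l) \<and> b (i + l) (k + l) \<le> 1"
      using bb by (auto simp: m'_def)
    have "\<bar>(\<lambda>p. E (p + l)) 0\<bar> \<le> 1 + real ((m' div 2) * ((m'-1) div 2)) * y^2"
      using less.IH[OF m'm(1) y ym' m'm(2), of "\<lambda>p. E (p + l)" "\<lambda>i k. b (i + l) (k + l)"] rec' bb'
      by simp
    also have "\<dots> \<le> B" unfolding B_def
    proof -
      have "real ((m' div 2) * ((m'-1) div 2)) \<le> (real m)^2"
        using Qle[of m' m] m'm by (simp add: power2_eq_square) (metis of_nat_le_iff of_nat_mult)
      then show "1 + real ((m' div 2) * ((m'-1) div 2)) * y^2 \<le> 1 + (real m)^2 * y^2"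
        by (intro add_left_mono mult_right_mono) auto
    qed
    finally show "\<bar>E (Suc j)\<bar> \<le> B" by (simp add: l_def)
  qed
  have dm: "d < m" using m1 by (simp add: d_def)
  note sb = small_bounds[OF y ym dm]
  have keyres: "(\<Sum>j\<in>{0..<d}. max 0 (- E (Suc j))) \<le> y * real (((d+1) div 2) * (d div 2))"
  proof (rule key[where v = "\<lambda>j. b (Suc j) (m-1)" and c = "\<lambda>j k. b (Suc j) k" and B = B])
    show "0 < y" by (rule y)
    show "0 \<le> B" by (rule B0)
    show "\<forall>j<d. E (Suc j) = b (Suc j) (m - 1) - y * (\<Sum>k = Suc j..<d. b (Suc j) k * E (Suc k))"
      using rec by (simp add: d_def)
    show "\<forall>j<d. 0 \<le> b (Suc j) (m - 1) \<and> b (Suc j) (m - 1) \<le> 1"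
      using bb by (simp add: d_def)
    show "\<forall>j<d. \<forall>k<d. Suc j \<le> k \<longrightarrow> 0 \<le> b (Suc j) k \<and> b (Suc j) k \<le> 1"
      using bb by (simp add: d_def)
    show "\<forall>j<d. \<bar>E (Suc j)\<bar> \<le> B" by (rule eB)
    show "y\<^sup>2 * (real d)\<^sup>2 * B \<le> 1" using sb(1) by (simp add: B_def)
  qed
  have Qeq: "((d+1) div 2) * (d div 2) = (m div 2) * ((m-1) div 2)" using m1 by (simp add: d_def)
  have E0: "E 0 = b 0 (m-1) - y * (\<Sum>j\<in>{0..<d}. b 0 j * E (Suc j))"
    using rec m1 by (simp add: d_def)
  have up: "- (\<Sum>j\<in>{0..<d}. b 0 j * E (Suc j)) \<le> (\<Sum>j\<in>{0..<d}. max 0 (- E (Suc j)))"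
  proof -
    have "(\<Sum>j\<in>{0..<d}. - (b 0 j * E (Suc j))) \<le> (\<Sum>j\<in>{0..<d}. max 0 (- E (Suc j)))"
    proof (rule sum_mono)
      fix j assume j: "j \<in> {0..<d}"
      have b01: "0 \<le> b 0 j" "b 0 j \<le> 1" using bb j by (auto simp: d_def)
      show "- (b 0 j * E (Suc j)) \<le> max 0 (- E (Suc j))"
      proof (cases "E (Suc j) < 0")
        case True
        have "b 0 j * (- E (Suc j)) \<le> 1 * (- E (Suc j))" using b01 True by (intro mult_right_mono) auto
        then show ?thesis by simp
      next
        case False then show ?thesis using b01 by simp
      qed
    qed
    then show ?thesis by (simp add: sum_negf)
  qed
  have lo: "(\<Sum>j\<in>{0..<d}. b 0 j * E (Suc j)) \<le> real d * B"
  proof -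
    have "(\<Sum>j\<in>{0..<d}. b 0 j * E (Suc j)) \<le> (\<Sum>j\<in>{0..<d}. B)"
    proof (rule sum_mono)
      fix j assume j: "j \<in> {0..<d}"
      have b01: "0 \<le> b 0 j" "b 0 j \<le> 1" using bb j by (auto simp: d_def)
      have "b 0 j * E (Suc j) \<le> b 0 j * \<bar>E (Suc j)\<bar>" using b01 by (intro mult_left_mono) auto
      also have "\<dots> \<le> 1 * B" using b01 eB j by (intro mult_mono) auto
      finally show "b 0 j * E (Suc j) \<le> B" by simp
    qed
    then show ?thesis by simp
  qed
  have b0: "0 \<le> b 0 (m-1)" "b 0 (m-1) \<le> 1" using bb m1 by auto
  have u1: "y * (- (\<Sum>j\<in>{0..<d}. b 0 j * E (Suc j))) \<le> y * (\<Sum>j\<in>{0..<d}. max 0 (- E (Suc j)))"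
    using up y by (intro mult_left_mono) auto
  have u2: "y * (\<Sum>j\<in>{0..<d}. max 0 (- E (Suc j))) \<le> y * (y * real ((m div 2) * ((m-1) div 2)))"
    using keyres[unfolded Qeq] y by (intro mult_left_mono) auto
  have "E 0 \<le> 1 + y * (y * real ((m div 2) * ((m-1) div 2)))"
    using E0 u1 u2 b0 by simp
  moreover have "E 0 \<ge> -1"
  proof -
    have "y * (\<Sum>j\<in>{0..<d}. b 0 j * E (Suc j)) \<le> y * (real d * B)" using lo y by (intro mult_left_mono) auto
    then show ?thesis using E0 b0 sb(2) by (simp add: B_def mult.assoc)
  qed
  moreover have "0 \<le> real ((m div 2) * ((m-1) div 2)) * y^2" by simp
  moreover have "y * (y * real ((m div 2) * ((m-1) div 2))) = real ((m div 2) * ((m-1) div 2)) * y^2"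
    by (simp add: power2_eq_square)
  ultimately show ?case by (intro abs_leI) linarith+
qed



lemma E_rec:
  fixes a :: "nat \<Rightarrow> nat \<Rightarrow> real"
  assumes s: "s \<noteq> 0" and t: "t \<noteq> 0" and p: "p < n"
  shows "hD a s n p / ((-s)^(n-1-p) * t) = a p (n-1) / t
     - (t/s) * (\<Sum>j\<in>{p..<n-1}. (a p j / t) * (hD a s n (Suc j) / ((-s)^(n-1-Suc j) * t)))"
proof -
  define W where "W = (-s)^(n-1-p) * t"
  define S where "S = (\<Sum>j\<in>{p..<n-1}. (a p j / t) * (hD a s n (Suc j) / ((-s)^(n-1-Suc j) * t)))"
  have W0: "W \<noteq> 0" using s t by (simp add: W_def)
  define g where "g j = (-s)^(j-p) * a p j * hD a s n (Suc j)" for j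
  have "hD a s n p = (\<Sum>j\<in>{p..<n}. g j)"
    using p by (simp add: hD_step g_def)
  also have "\<dots> = (\<Sum>j\<in>{p..<n-1}. g j) + g (n-1)"
    using sum.atLeastLessThan_Suc[of p "n-1" g] p by simp
  also have "g (n-1) = (-s)^(n-1-p) * a p (n-1)" using p by (simp add: g_def hD_end)
  also have "(\<Sum>j\<in>{p..<n-1}. g j) = (\<Sum>j\<in>{p..<n-1}. (-s)^(j-p) * a p j * hD a s n (Suc j))"
    by (simp add: g_def)
  also have "(\<Sum>j\<in>{p..<n-1}. (-s)^(j-p) * a p j * hD a s n (Suc j))
      = - (t/s) * S * W"
  proof -
    have "(-s)^(j-p) * a p j * hD a s n (Suc j) = - (t/s) * ((a p j / t) * (hD a s n (Suc j) / ((-s)^(n-1-Suc j) * t))) * W"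
      if j: "j \<in> {p..<n-1}" for j
    proof -
      have "(-s)^(n-1-p) = (-s)^(j-p) * (-s) * (-s)^(n-1-Suc j)"
      proof -
        have "n-1-p = (j-p) + 1 + (n-1-Suc j)" using j by auto
        then show ?thesis by (simp only: power_add) simp
      qed
      then show ?thesis using s t by (simp add: W_def field_simps)
    qed
    then show ?thesis by (simp add: S_def sum_distrib_left sum_distrib_right)
  qed
  finally have h: "hD a s n p = - (t/s) * S * W + (-s)^(n-1-p) * a p (n-1)" by simp
  have aw: "(a p (n-1) / t) * W = (-s)^(n-1-p) * a p (n-1)" using t by (simp add: W_def)
  have "hD a s n p = (a p (n-1) / t - (t/s) * S) * W"
    unfolding left_diff_distrib aw h by simp
  then show ?thesis using W0 by (simp add: W_def S_def)
qed


lemma pow_fix: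
  fixes s t :: real
  assumes s: "0 < s" and n: "1 \<le> n"
  shows "real ((n div 2) * ((n-1) div 2)) * s^(n-1) * t * (t/s)^2 = real ((n div 2) * ((n-1) div 2)) * s^(n-3) * t^3"
proof (cases "n < 3")
  case True
  then have "n = 1 \<or> n = 2" using n by auto
  then show ?thesis by auto
next
  case False
  then have "n - 1 = (n-3) + 2" by simp
  then have "s^(n-1) = s^(n-3) * s^2" by (simp only: power_add)
  then show ?thesis using s by (simp add: power2_eq_square power3_eq_cube field_simps)
qed

lemma s_pos_and_y:
  fixes s t :: real
  assumes n1: "1 \<le> n" and t: "0 < t" and st: "s / t > 4/5 * real n ^ 2"
  shows "0 < s" "t/s * (real n)^2 \<le> 5/4"
proof -
  have n2: "1 \<le> real n ^ 2" using n1 by simp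
  then have "0 < s / t" using st by linarith
  then show s: "0 < s" using t by (simp add: zero_less_divide_iff)
  have "real n ^ 2 < 5/4 * (s/t)" using st by linarith
  then have "real n ^ 2 * (t/s) < (5/4 * (s/t)) * (t/s)"
    using s t by (intro mult_strict_right_mono) auto
  also have "\<dots> = 5/4" using s t by simp
  finally show "t/s * (real n)^2 \<le> 5/4" by (simp add: mult.commute)
qed

lemma upper:
  fixes n :: nat and s t :: real
  assumes n1: "1 \<le> n" and t: "0 < t" and st: "s / t > 4/5 * real n ^ 2"
    and A: "A \<in> hess_set s n {0..t}"
  shows "\<bar>det A\<bar> \<le> s ^ (n - 1) * t + real ((n div 2) * ((n - 1) div 2)) * s ^ (n - 3) * t ^ 3"
proof -
  note sy = s_pos_and_y[OF n1 t st]
  have s: "0 < s" by (rule sy(1))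
  have Ac: "A \<in> carrier_mat n n" and Ah: "\<forall>i<n. \<forall>j<n. (i = Suc j \<longrightarrow> A $$ (i,j) = s) \<and> (Suc j < i \<longrightarrow> A $$ (i,j) = 0)"
    and Ab: "\<forall>i<n. \<forall>j<n. i \<le> j \<longrightarrow> A $$ (i,j) \<in> {0..t}"
    using A by (auto simp: hess_set_def)
  define a where "a i j = A $$ (i,j)" for i j
  have dA: "det A = hD a s n 0" unfolding a_def by (rule det_hess[OF Ac Ah])
  define E where "E p = hD a s n p / ((-s)^(n-1-p) * t)" for p
  define b where "b i j = a i j / t" for i j
  define y where "y = t / s"
  have y0: "0 < y" using s t by (simp add: y_def)
  have rec: "\<forall>p<n. E p = b p (n-1) - y * (\<Sum>j\<in>{p..<n-1}. b p j * E (Suc j))"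
    using E_rec[of s t _ n a] s t by (simp add: E_def b_def y_def)
  have bb: "\<forall>i j. i \<le> j \<longrightarrow> j < n \<longrightarrow> 0 \<le> b i j \<and> b i j \<le> 1"
    using Ab t by (auto simp: b_def a_def)
  have ym: "y * (real n)^2 \<le> 5/4" using sy(2) by (simp add: y_def)
  have cE: "\<bar>E 0\<bar> \<le> 1 + real ((n div 2) * ((n-1) div 2)) * y^2"
    by (rule core[OF y0 ym n1 rec bb])
  have "det A = E 0 * ((-s)^(n-1) * t)" using dA s t by (simp add: E_def)
  then have "\<bar>det A\<bar> = \<bar>E 0\<bar> * (s^(n-1) * t)" using s t by (simp add: abs_mult power_abs)
  also have "\<dots> \<le> (1 + real ((n div 2) * ((n-1) div 2)) * y^2) * (s^(n-1) * t)"
    using cE s t by (intro mult_right_mono) auto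
  also have "\<dots> = s^(n-1) * t + real ((n div 2) * ((n-1) div 2)) * s^(n-1) * t * (t/s)^2"
    by (simp add: y_def algebra_simps)
  also have "\<dots> = s ^ (n - 1) * t + real ((n div 2) * ((n - 1) div 2)) * s ^ (n - 3) * t ^ 3"
    using pow_fix[OF s n1, of t] by simp
  finally show ?thesis .
qed


lemma lower:
  fixes n :: nat and s t :: real
  assumes n1: "1 \<le> n" and t: "0 < t" and st: "s / t > 4/5 * real n ^ 2"
  shows "\<exists>A \<in> hess_set s n {0..t}.
            \<bar>det A\<bar> = s ^ (n - 1) * t + real ((n div 2) * ((n - 1) div 2)) * s ^ (n - 3) * t ^ 3"
proof -
  note sy = s_pos_and_y[OF n1 t st]
  have s: "0 < s" by (rule sy(1))
  define k where "k = n div 2"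
  have kn: "k < n" "k \<le> n - 1" using n1 by (auto simp: k_def)
  define cond where "cond i j = ((i = 0 \<and> (j = n-1 \<or> j < k)) \<or> (1 \<le> i \<and> i \<le> k \<and> k \<le> j \<and> j < n-1) \<or> (k < i \<and> j = n-1))" for i j
  define f where "f i j = (if i = Suc j then s else if Suc j < i then 0 else if cond i j then t else 0)" for i j
  define A where "A = mat n n (\<lambda>(i,j). f i j)"
  have Ae: "\<And>i j. i < n \<Longrightarrow> j < n \<Longrightarrow> A $$ (i,j) = f i j" by (simp add: A_def)
  have Ain: "A \<in> hess_set s n {0..t}"
    unfolding hess_set_def using t by (auto simp: A_def f_def)
  have Ac: "A \<in> carrier_mat n n" by (simp add: A_def)
  have Ah: "\<forall>i<n. \<forall>j<n. (i = Suc j \<longrightarrow> A $$ (i,j) = s) \<and> (Suc j < i \<longrightarrow> A $$ (i,j) = 0)"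
    by (auto simp: Ae f_def)
  have dA: "det A = hD f s n 0"
    using det_hess[OF Ac Ah] by (simp add: Ae cong: hD_cong)
  have fij: "\<And>i j. i \<le> j \<Longrightarrow> f i j = (if cond i j then t else 0)" by (auto simp: f_def)
  define E where "E p = hD f s n p / ((-s)^(n-1-p) * t)" for p
  have rec: "\<And>p. p < n \<Longrightarrow> E p = f p (n-1) / t - (t/s) * (\<Sum>j\<in>{p..<n-1}. (f p j / t) * E (Suc j))"
    using E_rec[of s t _ n f] s t by (simp add: E_def)
  have EV: "E p = 1" if p: "k < p" "p < n" for p
  proof -
    have "(\<Sum>j\<in>{p..<n-1}. (f p j / t) * E (Suc j)) = 0"
      by (rule sum.neutral) (use p in \<open>auto simp: fij cond_def\<close>)
    moreover have "f p (n-1) = t" using p by (simp add: fij cond_def)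
    ultimately show ?thesis using rec[OF p(2)] t by simp
  qed
  have EU: "E p = - (t/s) * real (n-1-k)" if p: "1 \<le> p" "p \<le> k" "p < n" for p
  proof -
    have "(\<Sum>j\<in>{p..<n-1}. (f p j / t) * E (Suc j)) = (\<Sum>j\<in>{p..<n-1}. if k \<le> j then 1 else 0)"
    proof (rule sum.cong[OF refl])
      fix j assume j: "j \<in> {p..<n-1}"
      show "(f p j / t) * E (Suc j) = (if k \<le> j then 1 else 0)"
      proof (cases "k \<le> j")
        case True
        then have "E (Suc j) = 1" using j by (intro EV) auto
        moreover have "f p j = t" using True j p by (simp add: fij cond_def)
        ultimately show ?thesis using True t by simp
      next
        case False
        have "f p j = 0" using False j p by (simp add: fij cond_def)
        then show ?thesis using False by simp
      qed
    qed
    also have "\<dots> = (\<Sum>j\<in>{j\<in>{p..<n-1}. k \<le> j}. 1)"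
      by (rule sum.inter_filter[symmetric]) simp
    also have "{j\<in>{p..<n-1}. k \<le> j} = {k..<n-1}" using p by auto
    also have "(\<Sum>j\<in>{k..<n-1}. (1::real)) = real (n-1-k)" by simp
    finally have S: "(\<Sum>j\<in>{p..<n-1}. (f p j / t) * E (Suc j)) = real (n-1-k)" .
    have "f p (n-1) = 0" using p kn by (simp add: fij cond_def)
    then show ?thesis using rec[OF p(3)] S by simp
  qed
  have E0: "E 0 = 1 + (t/s)^2 * (real k * real (n-1-k))"
  proof -
    have "(\<Sum>j\<in>{0..<n-1}. (f 0 j / t) * E (Suc j)) = (\<Sum>j\<in>{0..<n-1}. if j < k then - (t/s) * real (n-1-k) else 0)"
    proof (rule sum.cong[OF refl])
      fix j assume j: "j \<in> {0..<n-1}"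
      show "(f 0 j / t) * E (Suc j) = (if j < k then - (t/s) * real (n-1-k) else 0)"
      proof (cases "j < k")
        case True
        then have "E (Suc j) = - (t/s) * real (n-1-k)" using j kn by (intro EU) auto
        moreover have "f 0 j = t" using True j by (simp add: fij cond_def)
        ultimately show ?thesis using True t by simp
      next
        case False
        have "f 0 j = 0" using False j by (simp add: fij cond_def)
        then show ?thesis using False by simp
      qed
    qed
    also have "\<dots> = (\<Sum>j\<in>{j\<in>{0..<n-1}. j < k}. - (t/s) * real (n-1-k))"
      by (rule sum.inter_filter[symmetric]) simp
    also have "{j\<in>{0..<n-1}. j < k} = {0..<k}" using kn by auto
    also have "(\<Sum>j\<in>{0..<k}. - (t/s) * real (n-1-k)) = - real k * (t/s) * real (n-1-k)" by simp
    finally have S: "(\<Sum>j\<in>{0..<n-1}. (f 0 j / t) * E (Suc j)) = - real k * (t/s) * real (n-1-k)" .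
    have "f 0 (n-1) = t" by (simp add: fij cond_def)
    then have "E 0 = t / t - (t/s) * (- real k * (t/s) * real (n-1-k))" using rec[of 0] n1 S by simp
    also have "\<dots> = 1 + (t/s)^2 * (real k * real (n-1-k))" using t by (simp add: power2_eq_square)
    finally show ?thesis .
  qed
  have kQ: "real k * real (n-1-k) = real ((n div 2) * ((n-1) div 2))"
  proof -
    have h: "n - 1 - k = (n-1) div 2" unfolding k_def by linarith
    show ?thesis unfolding h by (simp only: k_def of_nat_mult)
  qed
  have "0 \<le> (t/s)^2 * (real k * real (n-1-k))" by simp
  then have E0p: "0 < E 0" unfolding E0 by linarith
  have "det A = E 0 * ((-s)^(n-1) * t)" using dA s t by (simp add: E_def)
  then have "\<bar>det A\<bar> = E 0 * (s^(n-1) * t)" using s t E0p by (simp add: abs_mult power_abs)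
  also have "\<dots> = s^(n-1) * t + real ((n div 2) * ((n-1) div 2)) * s^(n-1) * t * (t/s)^2"
    unfolding E0 kQ by (simp add: algebra_simps)
  also have "\<dots> = s ^ (n - 1) * t + real ((n div 2) * ((n - 1) div 2)) * s ^ (n - 3) * t ^ 3"
    using pow_fix[OF s n1, of t] by simp
  finally show ?thesis using Ain by blast
qed

theorem theorem2p9:
  fixes n :: nat and s t :: real
  assumes "n \<ge> 1" and "t > 0" and "s / t > 4 / 5 * real n ^ 2"
  shows "(\<exists>A \<in> hess_set s n {0..t}.
            \<bar>det A\<bar> = s ^ (n - 1) * t + real ((n div 2) * ((n - 1) div 2)) * s ^ (n - 3) * t ^ 3)
       \<and> (\<forall>A \<in> hess_set s n {0..t}.
            \<bar>det A\<bar> \<le> s ^ (n - 1) * t + real ((n div 2) * ((n - 1) div 2)) * s ^ (n - 3) * t ^ 3)"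
  using lower[OF assms] upper[OF assms] by blast


end
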